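(* Let $f$, $g$, $D$, $Z$, $c$, $[\rho_\ell,\rho_u]$ be as in the context. For every $z$ with $\|z\|\le Z$, every integer $j\ge0$, and all $\rho\le\eta$ in $[\rho_\ell,\rho_u]$, $$\|g^j(z,\rho)-g^j(z,\eta)\|\le(\eta-\rho)\,\frac{D(\rho)^j L Z}{c}.$$
   Context: All norms are Euclidean. $f:\mathbb{R}^n\to\mathbb{R}$ is convex and $L$-smooth (differentiable with $\|\nabla f(z_1)-\nabla f(z_2)\|\le L\|z_1-z_2\|$), with unique minimum value $0$ attained at $f(0)=0$. Fixed constants: $Z>0$, an interval $[\rho_\ell,\rho_u]\subset(0,\infty)$, and $c\in(0,1)$ such that the guaranteed progress condition holds: $\|z-\rho\nabla f(z)\|\le(1-c)\|z\|$ for all $\rho\in[\rho_\ell,\rho_u]$ and all $z$ with $\|z\|\le Z$. $g(z,\rho)=z-\rho\nabla f(z)$, $g^j$ denotes $j$ iterated applications of $g(\cdot,\rho)$, and $D(\rho)=\max\{1,L\rho-1\}$. *)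

theory Defs
  imports "HOL-Analysis.Analysis"
begin

definition gstep :: "('a::real_normed_vector \<Rightarrow> 'a) \<Rightarrow> 'a \<Rightarrow> real \<Rightarrow> 'a" where
  "gstep gradf z \<rho> = z - \<rho> *\<^sub>R gradf z"

definition giter :: "('a::real_normed_vector \<Rightarrow> 'a) \<Rightarrow> nat \<Rightarrow> 'a \<Rightarrow> real \<Rightarrow> 'a" where
  "giter gradf j z \<rho> = ((\<lambda>x. gstep gradf x \<rho>) ^^ j) z"

definition Dfac :: "real \<Rightarrow> real \<Rightarrow> real" where
  "Dfac L \<rho> = max 1 (L * \<rho> - 1)"

end

theory Submission
  imports Defs
begin

lemma line_deriv:
  fixes F :: "'a::real_inner \<Rightarrow> real"
  assumes d: "\<And>x. (F has_derivative (\<lambda>h. G x \<bullet> h)) (at x)"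
  shows "((\<lambda>t. F (p + t *\<^sub>R v)) has_real_derivative (G (p + t *\<^sub>R v) \<bullet> v)) (at t within S)"
proof -
  have l: "((\<lambda>t. p + t *\<^sub>R v) has_derivative (\<lambda>s. s *\<^sub>R v)) (at t within S)"
    by (auto intro!: derivative_eq_intros)
  have "((\<lambda>t. F (p + t *\<^sub>R v)) has_derivative (\<lambda>s. G (p + t *\<^sub>R v) \<bullet> (s *\<^sub>R v))) (at t within S)"
    using has_derivative_compose[OF l d] .
  then show ?thesis unfolding has_field_derivative_def
    by (rule has_derivative_eq_rhs) (auto simp: fun_eq_iff)
qed

lemma descent:
  fixes F :: "'a::real_inner \<Rightarrow> real"
  assumes d: "\<And>x. (F has_derivative (\<lambda>h. G x \<bullet> h)) (at x)"
    and lip: "\<And>x y. norm (G x - G y) \<le> L * norm (x - y)"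
  shows "F y \<le> F x + G x \<bullet> (y - x) + L / 2 * norm (y - x) ^ 2"
proof -
  define v where "v = y - x"
  define h where "h t = F (x + t *\<^sub>R v) - t * (G x \<bullet> v) - L / 2 * t^2 * norm v ^ 2" for t
  have "h 1 \<le> h 0"
  proof (rule DERIV_nonpos_imp_nonincreasing[of 0 1 h])
    fix t :: real assume t: "0 \<le> t" "t \<le> 1"
    have D: "(h has_real_derivative (G (x + t *\<^sub>R v) \<bullet> v - G x \<bullet> v - L / 2 * (2 * t) * norm v ^ 2)) (at t)"
      unfolding h_def
      by (auto intro!: derivative_eq_intros line_deriv[OF d] simp: power2_eq_square)
    have "(G (x + t *\<^sub>R v) - G x) \<bullet> v \<le> norm (G (x + t *\<^sub>R v) - G x) * norm v"
      by (rule norm_cauchy_schwarz)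
    also have "\<dots> \<le> (L * norm (t *\<^sub>R v)) * norm v"
      using lip[of "x + t *\<^sub>R v" x] by (intro mult_right_mono) auto
    also have "\<dots> = L * t * norm v ^ 2" using t by (simp add: power2_eq_square)
    finally have "G (x + t *\<^sub>R v) \<bullet> v - G x \<bullet> v - L / 2 * (2 * t) * norm v ^ 2 \<le> 0"
      by (simp add: inner_diff_left)
    with D show "\<exists>y. (h has_real_derivative y) (at t) \<and> y \<le> 0" by blast
  qed simp
  then show ?thesis unfolding h_def v_def by simp
qed

lemma tangent:
  fixes F :: "'a::real_inner \<Rightarrow> real"
  assumes cv: "convex_on UNIV F"
    and d: "\<And>x. (F has_derivative (\<lambda>h. G x \<bullet> h)) (at x)"
  shows "F w \<ge> F x + G x \<bullet> (w - x)"
proof -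
  define h where "h t = F (x + t *\<^sub>R (w - x))" for t
  have ch: "convex_on UNIV h"
  proof (rule convex_onI)
    fix u s t :: real assume "0 < u" "u < 1"
    have "x + ((1 - u) *\<^sub>R s + u *\<^sub>R t) *\<^sub>R (w - x) = (1 - u) *\<^sub>R (x + s *\<^sub>R (w - x)) + u *\<^sub>R (x + t *\<^sub>R (w - x))"
      by (simp add: algebra_simps)
    then show "h ((1 - u) *\<^sub>R s + u *\<^sub>R t) \<le> (1 - u) * h s + u * h t"
      unfolding h_def using convex_onD[OF cv, of u "x + s *\<^sub>R (w - x)" "x + t *\<^sub>R (w - x)"] \<open>0 < u\<close> \<open>u < 1\<close> by auto
  qed simp
  have "(h has_real_derivative (G (x + 0 *\<^sub>R (w - x)) \<bullet> (w - x))) (at 0 within UNIV)"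
    unfolding h_def by (rule line_deriv[OF d])
  from convex_on_imp_above_tangent[OF ch _ _ _ this, of 1]
  have "h 1 - h 0 \<ge> G x \<bullet> (w - x)" by simp
  then show ?thesis by (simp add: h_def)
qed

lemma half_cocoercive:
  fixes F :: "'a::real_inner \<Rightarrow> real"
  assumes cv: "convex_on UNIV F"
    and d: "\<And>x. (F has_derivative (\<lambda>h. G x \<bullet> h)) (at x)"
    and lip: "\<And>x y. norm (G x - G y) \<le> L * norm (x - y)"
    and L: "L > 0"
  shows "F y \<ge> F x + G x \<bullet> (y - x) + norm (G y - G x) ^ 2 / (2 * L)"
proof -
  define e where "e = G y - G x"
  define w where "w = y - (1 / L) *\<^sub>R e"
  have dphi: "((\<lambda>w. F w - G x \<bullet> w) has_derivative (\<lambda>h. (G w - G x) \<bullet> h)) (at w)" for w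
    using d[of w] by (auto intro!: derivative_eq_intros simp: inner_diff_left)
  have lip2: "norm ((G a - G x) - (G b - G x)) \<le> L * norm (a - b)" for a b
    using lip[of a b] by simp
  have t: "F w \<ge> F x + G x \<bullet> (w - x)" by (rule tangent[OF cv d])
  have ds: "F w - G x \<bullet> w \<le> (F y - G x \<bullet> y) + (G y - G x) \<bullet> (w - y) + L / 2 * norm (w - y) ^ 2"
    by (rule descent[OF dphi lip2])
  have wy: "w - y = - ((1 / L) *\<^sub>R e)" by (simp add: w_def)
  have i1: "(G y - G x) \<bullet> (w - y) = - (norm e ^ 2 / L)"
    unfolding wy e_def by (simp add: power2_norm_eq_inner)
  have i2: "L / 2 * norm (w - y) ^ 2 = norm e ^ 2 / (2 * L)"
    unfolding wy using L by (simp add: power2_eq_square field_simps)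
  have "G x \<bullet> (w - x) = G x \<bullet> w - G x \<bullet> x" by (simp add: inner_diff_right)
  moreover have "G x \<bullet> (y - x) = G x \<bullet> y - G x \<bullet> x" by (simp add: inner_diff_right)
  moreover have "norm e ^ 2 / L = 2 * (norm e ^ 2 / (2 * L))" using L by simp
  ultimately show ?thesis using t ds i1 i2 unfolding e_def by linarith
qed

lemma cocoercive:
  fixes F :: "'a::real_inner \<Rightarrow> real"
  assumes cv: "convex_on UNIV F"
    and d: "\<And>x. (F has_derivative (\<lambda>h. G x \<bullet> h)) (at x)"
    and lip: "\<And>x y. norm (G x - G y) \<le> L * norm (x - y)"
    and L: "L > 0"
  shows "norm (G x - G y) ^ 2 / L \<le> (G x - G y) \<bullet> (x - y)"
proof -
  have a: "F y \<ge> F x + G x \<bullet> (y - x) + norm (G y - G x) ^ 2 / (2 * L)"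
    by (rule half_cocoercive[OF cv d lip L])
  have b: "F x \<ge> F y + G y \<bullet> (x - y) + norm (G x - G y) ^ 2 / (2 * L)"
    by (rule half_cocoercive[OF cv d lip L])
  have n: "norm (G y - G x) = norm (G x - G y)" by (rule norm_minus_commute)
  have "(G x - G y) \<bullet> (x - y) = - (G x \<bullet> (y - x)) - G y \<bullet> (x - y)"
    by (simp add: algebra_simps inner_diff_left inner_diff_right)
  moreover have "norm (G x - G y) ^ 2 / L = 2 * (norm (G x - G y) ^ 2 / (2 * L))" using L by simp
  ultimately show ?thesis using a[unfolded n] b by linarith
qed

lemma step_lip:
  fixes u d :: "'a::real_inner"
  assumes co: "norm d ^ 2 / L \<le> d \<bullet> u" and dl: "norm d \<le> L * norm u"
    and L: "L > 0" and r: "r \<ge> 0"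
  shows "norm (u - r *\<^sub>R d) \<le> max 1 (L * r - 1) * norm u"
proof -
  have e: "norm (u - r *\<^sub>R d) ^ 2 = norm u ^ 2 - 2 * r * (d \<bullet> u) + r^2 * norm d ^ 2"
  proof -
    have "norm (u - r *\<^sub>R d) ^ 2 = (u - r *\<^sub>R d) \<bullet> (u - r *\<^sub>R d)" by (rule power2_norm_eq_inner)
    also have "\<dots> = u \<bullet> u - 2 * r * (d \<bullet> u) + r^2 * (d \<bullet> d)"
      by (simp add: inner_diff_left inner_diff_right inner_commute algebra_simps power2_eq_square)
    finally show ?thesis by (simp add: power2_norm_eq_inner)
  qed
  have co': "norm d ^ 2 \<le> L * (d \<bullet> u)" using co L by (simp add: divide_le_eq mult.commute)
  have "norm (u - r *\<^sub>R d) ^ 2 \<le> (max 1 (L * r - 1) * norm u) ^ 2"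
  proof (cases "L * r \<le> 2")
    case True
    have "r^2 * norm d ^ 2 \<le> 2 * r * (d \<bullet> u)"
    proof -
      have "r^2 * norm d ^ 2 = r * (r * norm d ^ 2)" by (simp add: power2_eq_square)
      also have "\<dots> \<le> r * ((2 / L) * norm d ^ 2)"
        using True L r by (intro mult_left_mono mult_right_mono) (auto simp: field_simps)
      also have "\<dots> \<le> r * ((2 / L) * (L * (d \<bullet> u)))"
        using co' L r by (intro mult_left_mono) auto
      also have "\<dots> = 2 * r * (d \<bullet> u)" using L by simp
      finally show ?thesis .
    qed
    then have "norm (u - r *\<^sub>R d) ^ 2 \<le> norm u ^ 2" using e by linarith
    also have "\<dots> \<le> (max 1 (L * r - 1) * norm u) ^ 2"
      using mult_right_mono[of 1 "max 1 (L * r - 1)" "norm u"] by (intro power_mono) auto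
    finally show ?thesis .
  next
    case False
    have "r * 2 \<le> r * (L * r)" using False r by (intro mult_left_mono) auto
    then have k: "r^2 - 2 * r / L \<ge> 0" using L r
      by (simp add: field_simps power2_eq_square)
    have "2 * r * (d \<bullet> u) \<ge> 2 * r * (norm d ^ 2 / L)" using co r by (intro mult_left_mono) auto
    then have "norm (u - r *\<^sub>R d) ^ 2 \<le> norm u ^ 2 + (r^2 - 2 * r / L) * norm d ^ 2"
      using e by (simp add: algebra_simps)
    also have "\<dots> \<le> norm u ^ 2 + (r^2 - 2 * r / L) * (L * norm u) ^ 2"
      using dl k by (intro add_left_mono mult_left_mono power_mono) auto
    also have "\<dots> = ((L * r - 1) * norm u) ^ 2"
      using L by (simp add: field_simps power2_eq_square)
    also have "\<dots> \<le> (max 1 (L * r - 1) * norm u) ^ 2"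
      using False by simp
    finally show ?thesis .
  qed
  then show ?thesis
    by (rule power2_le_imp_le) auto
qed


lemma arith_step:
  fixes K D q c e :: real
  assumes K: "K \<ge> 0" and D: "D \<ge> 1" and q: "q = 1 - c" and c: "c > 0" "c < 1"
    and e: "e \<le> K * D ^ j * (1 - q ^ j) / c"
  shows "D * e + K * q ^ j \<le> K * D ^ Suc j * (1 - q ^ Suc j) / c"
proof -
  have Dj: "D ^ Suc j \<ge> 1" using D by (rule one_le_power)
  have qj: "q ^ j \<ge> 0" using q c by simp
  have "D * e \<le> D * (K * D ^ j * (1 - q ^ j) / c)" using e D by (intro mult_left_mono) auto
  also have "\<dots> = K * D ^ Suc j * (1 - q ^ j) / c" by simp
  finally have a: "D * e \<le> K * D ^ Suc j * (1 - q ^ j) / c" .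
  have "K * q ^ j \<le> K * D ^ Suc j * q ^ j"
    using mult_left_mono[OF mult_right_mono[OF Dj qj] K] by simp
  also have "\<dots> = K * D ^ Suc j * (c * q ^ j) / c"
    using c by simp
  also have "c * q ^ j = q ^ j - q ^ Suc j"
  proof -
    have "q ^ j - q ^ Suc j = (1 - q) * q ^ j" by (simp add: algebra_simps)
    then show ?thesis using q by simp
  qed
  finally have b: "K * q ^ j \<le> K * D ^ Suc j * (q ^ j - q ^ Suc j) / c" .
  have "K * D ^ Suc j * (1 - q ^ j) / c + K * D ^ Suc j * (q ^ j - q ^ Suc j) / c
      = K * D ^ Suc j * (1 - q ^ Suc j) / c" by (simp add: add_divide_distrib[symmetric] algebra_simps)
  with a b show ?thesis by linarith
qed

theorem mainTheorem8:
  fixes f :: "'a::euclidean_space \<Rightarrow> real"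
    and gradf :: "'a \<Rightarrow> 'a"
    and L Z c \<rho>l \<rho>u \<rho> \<eta> :: real
    and z :: 'a and j :: nat
  assumes convex: "convex_on UNIV f"
    and grad: "\<And>x. (f has_derivative (\<lambda>h. gradf x \<bullet> h)) (at x)"
    and smooth: "\<And>x y. norm (gradf x - gradf y) \<le> L * norm (x - y)"
    and min0: "f 0 = 0"
    and uniqmin: "\<And>x. x \<noteq> 0 \<Longrightarrow> f x > 0"
    and Zpos: "Z > 0"
    and rho_int: "0 < \<rho>l" "\<rho>l \<le> \<rho>u"
    and cbounds: "0 < c" "c < 1"
    and progress: "\<And>r x. \<rho>l \<le> r \<Longrightarrow> r \<le> \<rho>u \<Longrightarrow> norm x \<le> Z \<Longrightarrow>
                      norm (x - r *\<^sub>R gradf x) \<le> (1 - c) * norm x"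
    and znorm: "norm z \<le> Z"
    and rho_in: "\<rho>l \<le> \<rho>" "\<rho> \<le> \<eta>" "\<eta> \<le> \<rho>u"
  shows "norm (giter gradf j z \<rho> - giter gradf j z \<eta>) \<le> (\<eta> - \<rho>) * (Dfac L \<rho> ^ j * L * Z / c)"
proof -
  obtain b :: 'a where b: "b \<in> Basis" using nonempty_Basis by blast
  have "norm (gradf b - gradf 0) \<le> L" using smooth[of b 0] b by simp
  then have L0: "L \<ge> 0" by (meson norm_ge_zero order_trans)
  have "(\<lambda>h. gradf 0 \<bullet> h) = (\<lambda>v. 0)"
  proof (rule differential_zero_maxmin[of 0 UNIV f])
    show "(\<forall>y\<in>UNIV. f y \<le> f 0) \<or> (\<forall>y\<in>UNIV. f 0 \<le> f y)"
    proof (rule disjI2, intro ballI)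
      fix y :: 'a show "f 0 \<le> f y" using uniqmin[of y] min0 by (cases "y = 0") auto
    qed
  qed (auto intro: grad)
  then have "gradf 0 \<bullet> gradf 0 = 0" by (metis (no_types))
  then have g0: "gradf 0 = 0" by simp
  have gn: "norm (gradf y) \<le> L * norm y" for y using smooth[of y 0] g0 by simp
  have rec: "giter gradf (Suc i) z r = giter gradf i z r - r *\<^sub>R gradf (giter gradf i z r)" for i r
    by (simp add: giter_def gstep_def)
  have q0: "0 \<le> 1 - c" "1 - c \<le> 1" using cbounds by auto
  have nb: "norm (giter gradf i z r) \<le> (1 - c) ^ i * Z" if r: "\<rho>l \<le> r" "r \<le> \<rho>u" for i r
  proof (induction i)
    case 0 then show ?case using znorm by (simp add: giter_def)
  next
    case (Suc i)
    have "(1 - c) ^ i * Z \<le> 1 * Z" using q0 Zpos by (intro mult_right_mono power_le_one) auto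
    then have "norm (giter gradf i z r) \<le> Z" using Suc by simp
    from progress[OF r this] have "norm (giter gradf (Suc i) z r) \<le> (1 - c) * norm (giter gradf i z r)"
      by (simp add: rec)
    also have "\<dots> \<le> (1 - c) * ((1 - c) ^ i * Z)" using Suc q0 by (intro mult_left_mono) auto
    finally show ?case by simp
  qed
  define D where "D = Dfac L \<rho>"
  have D1: "D \<ge> 1" by (simp add: D_def Dfac_def)
  have rpos: "\<rho> \<ge> 0" using rho_int rho_in by simp
  have slip: "norm ((a - \<rho> *\<^sub>R gradf a) - (b - \<rho> *\<^sub>R gradf b)) \<le> D * norm (a - b)" for a b
  proof (cases "L = 0")
    case True
    then have "gradf a = gradf b" using smooth[of a b] by simp
    then show ?thesis using True by (simp add: D_def Dfac_def)
  next
    case False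
    then have Lp: "L > 0" using L0 by simp
    have co: "norm (gradf a - gradf b) ^ 2 / L \<le> (gradf a - gradf b) \<bullet> (a - b)"
      by (rule cocoercive[OF convex grad smooth Lp])
    have "norm ((a - b) - \<rho> *\<^sub>R (gradf a - gradf b)) \<le> max 1 (L * \<rho> - 1) * norm (a - b)"
      by (rule step_lip[OF co smooth Lp rpos])
    then show ?thesis by (simp add: D_def Dfac_def algebra_simps)
  qed
  define K where "K = (\<eta> - \<rho>) * L * Z"
  have K0: "K \<ge> 0" using rho_in L0 Zpos by (simp add: K_def)
  have inv: "norm (giter gradf i z \<rho> - giter gradf i z \<eta>) \<le> K * D ^ i * (1 - (1 - c) ^ i) / c" for i
  proof (induction i)
    case 0 then show ?case by (simp add: giter_def)
  next
    case (Suc i)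
    let ?x = "giter gradf i z \<rho>" and ?y = "giter gradf i z \<eta>"
    have "giter gradf (Suc i) z \<rho> - giter gradf (Suc i) z \<eta>
        = ((?x - \<rho> *\<^sub>R gradf ?x) - (?y - \<rho> *\<^sub>R gradf ?y)) + (\<eta> - \<rho>) *\<^sub>R gradf ?y"
      by (simp add: rec algebra_simps)
    then have "norm (giter gradf (Suc i) z \<rho> - giter gradf (Suc i) z \<eta>)
        \<le> norm ((?x - \<rho> *\<^sub>R gradf ?x) - (?y - \<rho> *\<^sub>R gradf ?y)) + norm ((\<eta> - \<rho>) *\<^sub>R gradf ?y)"
      by (metis norm_triangle_ineq)
    also have "\<dots> \<le> D * norm (?x - ?y) + (\<eta> - \<rho>) * (L * ((1 - c) ^ i * Z))"
    proof (rule add_mono[OF slip])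
      have "norm (gradf ?y) \<le> L * ((1 - c) ^ i * Z)"
        using gn[of ?y] nb[of \<eta> i] rho_in rho_int L0 by (meson dual_order.trans mult_left_mono)
      then show "norm ((\<eta> - \<rho>) *\<^sub>R gradf ?y) \<le> (\<eta> - \<rho>) * (L * ((1 - c) ^ i * Z))"
        using rho_in by (simp add: mult_left_mono)
    qed
    also have "\<dots> = D * norm (?x - ?y) + K * (1 - c) ^ i" by (simp add: K_def)
    also have "\<dots> \<le> K * D ^ Suc i * (1 - (1 - c) ^ Suc i) / c"
      by (rule arith_step[OF K0 D1 refl cbounds Suc])
    finally show ?case .
  qed
  have "K * D ^ j * (1 - (1 - c) ^ j) / c \<le> K * D ^ j * 1 / c"
    using K0 D1 q0 cbounds by (intro divide_right_mono mult_left_mono) auto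
  moreover have "(\<eta> - \<rho>) * (Dfac L \<rho> ^ j * L * Z / c) = K * D ^ j * 1 / c"
    by (simp add: K_def D_def)
  ultimately show ?thesis using inv[of j] by linarith
qed

end
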